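(* Let $X$ be a supertropical semiring. Let $n,j,i_1,\dots,i_j,d_1,\dots,d_j\in\mathbb{N}_{\ge1}$ with $i_1<i_2<\dots<i_j\le n$ and $d_1>d_2>\dots>d_j$, and set $i_0=0$. Then for all $x_1,\dots,x_n\in X$, $$\mathrm{Minsym}_n\Big(\prod_{t=1}^{j}(x_{i_{t-1}+1}\cdots x_{i_t})^{d_t}\Big)=e_{i_j}(x_1,\dots,x_n)^{d_j}\cdot\mathrm{Minsym}_n\Big(\prod_{t=1}^{j-1}(x_{i_{t-1}+1}\cdots x_{i_t})^{d_t-d_j}\Big).$$
   Context: A semiring $(X,+,0,\cdot)$: $(X,+,0)$ commutative monoid, $(X,\cdot)$ semigroup, distributivity, $0$ absorbing. $\nu(x)=x+x$. A supertropical semiring is a unital commutative semiring with $2=4$ (where $n=1+\dots+1$), such that $a+b\in\{a,b\}$ whenever $\nu(a)\ne\nu(b)$, and $a+b=\nu(a)$ whenever $\nu(a)=\nu(b)$. For a pure monomial $m=x_1^{c_1}\cdots x_n^{c_n}$ (coefficient $1$), its minimal symmetrization $\mathrm{Minsym}_n(m)$ is the sum, with each term taken exactly once, of the distinct monomials in $\{x_{\sigma(1)}^{c_1}\cdots x_{\sigma(n)}^{c_n}:\sigma\in S_n\}$ (monomials equal up to reordering of factors are identified); the minimal symmetrization of the empty monomial is $1$. $e_k(x_1,\dots,x_n)$ is the sum of all products of $k$ distinct variables. *)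

theory Defs
  imports "HOL-Combinatorics.Permutations"
begin

text \<open>Supertropical semiring: unital commutative semiring (no 0 \<noteq> 1 required)
  with 2 = 4 and the supertropical addition rules, where nu a = a + a.\<close>

class supertropical = comm_semiring_0 + comm_monoid_mult +
  assumes two_eq_four: "(1::'a) + 1 = 1 + 1 + 1 + 1"
    and add_distinct_nu: "a + a \<noteq> b + b \<Longrightarrow> a + b \<in> {a, b}"
    and add_equal_nu: "a + a = b + b \<Longrightarrow> a + b = a + a"

text \<open>A pure monomial in x_1..x_n is given by its exponent vector c (indices 1..n).
  Its minimal symmetrization: the sum, each taken once, of the distinct monomials
  obtained by permuting the variables, i.e. the distinct exponent vectors c o sigma.\<close>

definition minsym :: "nat \<Rightarrow> (nat \<Rightarrow> nat) \<Rightarrow> (nat \<Rightarrow> 'a) \<Rightarrow> 'a::{comm_semiring_0,comm_monoid_mult}" where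
  "minsym n c x = (\<Sum>a \<in> {c \<circ> \<sigma> | \<sigma>. \<sigma> permutes {1..n}}. \<Prod>k\<in>{1..n}. x k ^ a k)"

definition esym :: "nat \<Rightarrow> nat \<Rightarrow> (nat \<Rightarrow> 'a) \<Rightarrow> 'a::{comm_semiring_0,comm_monoid_mult}" where
  "esym n k x = (\<Sum>S \<in> {S. S \<subseteq> {1..n} \<and> card S = k}. \<Prod>m\<in>S. x m)"

text \<open>Exponent vector of the block x_{i(t-1)+1} ... x_{i t} (indicator of the block).\<close>

definition blk :: "(nat \<Rightarrow> nat) \<Rightarrow> nat \<Rightarrow> nat \<Rightarrow> nat" where
  "blk i t k = (if i (t - 1) < k \<and> k \<le> i t then 1 else 0)"

end

theory Submission
  imports Defs
begin


lemma st_dbl: "(z::'a::supertropical) + z = (1+1) * z"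
  by (simp add: distrib_right)

lemma st_two_idem: "((1::'a::supertropical)+1) * (1+1) = 1+1"
proof -
  have "((1::'a)+1)*(1+1) = 1+1+1+1" by (simp add: distrib_left distrib_right add.assoc[symmetric])
  also have "\<dots> = 1+1" by (rule two_eq_four[symmetric])
  finally show ?thesis .
qed

lemma st_two_pow: "0 < D \<Longrightarrow> ((1::'a::supertropical)+1) ^ D = 1+1"
proof (induction D)
  case (Suc D) then show ?case
    by (cases D) (auto simp: st_two_idem)
qed simp

lemma st_cases: "(a::'a::supertropical) + a = b + b \<or> a + b = a \<or> b + a = b"
  using add_distinct_nu[of a b] by (auto simp: add.commute)

lemma st_absorb_pow:
  fixes a b :: "'a::supertropical"
  assumes ab: "a + b = a" and l: "0 < l"
  shows "a^(k+l) + a^k * b^l = a^(k+l)"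
  using l
proof (induction l arbitrary: k rule: nat_induct_non_zero)
  case 1
  have "a^k*a + a^k*b = a^k*a" using ab by (metis distrib_left)
  moreover have "a^(k+1) = a^k*a" by (simp only: power_add power_one_right)
  ultimately show ?case by simp
next
  case (Suc l)
  have e: "a^(k+1)*b^l + a^k*b^(Suc l) = a^(k+1)*b^l"
  proof -
    have "a^k*b^l*(a+b) = a^k*b^l*a" using ab by simp
    then show ?thesis by (simp add: distrib_left algebra_simps)
  qed
  have "a^(k+Suc l) + a^k*b^(Suc l) = (a^((k+1)+l) + a^(k+1)*b^l) + a^k*b^(Suc l)"
    using Suc.IH[of "k+1"] by simp
  also have "\<dots> = a^((k+1)+l) + (a^(k+1)*b^l + a^k*b^(Suc l))" by (simp add: add.assoc)
  also have "\<dots> = a^(k+Suc l)" using e Suc.IH[of "k+1"] by simp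
  finally show ?case .
qed

lemma st_dbl_pow:
  fixes a b :: "'a::supertropical"
  assumes "a + a = b + b"
  shows "(1+1) * b^l = (1+1) * a^l"
proof (cases "l = 0")
  case True then show ?thesis by simp
next
  case False
  have "(1+1) * b^l = ((1+1)*b)^l" using st_two_pow[of l, where 'a='a] False
    by (simp add: power_mult_distrib)
  also have "\<dots> = ((1+1)*a)^l" by (metis assms st_dbl)
  also have "\<dots> = (1+1) * a^l" using st_two_pow[of l, where 'a='a] False
    by (simp add: power_mult_distrib)
  finally show ?thesis .
qed

lemma st_mix:
  fixes a b :: "'a::supertropical"
  assumes "0 < k" "0 < l"
  shows "a^(k+l) + b^(k+l) + a^k * b^l = a^(k+l) + b^(k+l)"
proof -
  consider "a + a = b + b" | "a + b = a" | "b + a = b" using st_cases by blast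
  then show ?thesis
  proof cases
    case 1
    let ?N = "k+l"
    let ?t = "a^k*b^l"
    have q: "a^?N + a^?N = b^?N + b^?N" using st_dbl_pow[OF 1, of ?N] by (metis st_dbl)
    have h1: "a^?N + b^?N = (1+1) * a^?N" using add_equal_nu[OF q] by (metis st_dbl)
    have h2: "(1+1) * ?t = (1+1) * a^?N"
    proof -
      have "(1+1) * ?t = a^k * ((1+1) * b^l)" by (rule mult.left_commute)
      also have "\<dots> = a^k * ((1+1) * a^l)" using st_dbl_pow[OF 1, of l] by simp
      also have "\<dots> = (1+1) * a^?N" by (simp add: power_add mult.left_commute)
      finally show ?thesis .
    qed
    have u: "(1+1)*a^?N + (1+1)*a^?N = (1+1)*a^?N"
      using st_dbl[of "(1+1)*a^?N"] st_two_idem[where 'a='a] by (metis mult.assoc)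
    have v: "?t + ?t = (1+1)*a^?N" by (metis h2 st_dbl)
    have h3: "(1+1)*a^?N + (1+1)*a^?N = ?t + ?t" using u v by simp
    have "(1+1)*a^?N + ?t = (1+1)*a^?N" using add_equal_nu[OF h3] u by simp
    then show ?thesis using h1 by simp
  next
    case 2
    have h: "a^(k+l) + a^k * b^l = a^(k+l)" by (rule st_absorb_pow[OF 2 assms(2)])
    have "a^(k+l) + b^(k+l) + a^k*b^l = (a^(k+l) + a^k*b^l) + b^(k+l)" by (simp only: add_ac)
    then show ?thesis using h by simp
  next
    case 3
    have "b^(l+k) + b^l * a^k = b^(l+k)" by (rule st_absorb_pow[OF 3 assms(1)])
    then have h: "b^(k+l) + a^k * b^l = b^(k+l)" by (simp add: add.commute mult.commute)
    have "a^(k+l) + b^(k+l) + a^k*b^l = a^(k+l) + (b^(k+l) + a^k*b^l)" by (simp only: add_ac)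
    then show ?thesis using h by simp
  qed
qed

lemma st_frob2:
  fixes a b :: "'a::supertropical"
  assumes "0 < D"
  shows "(a+b)^D = a^D + b^D"
proof -
  consider "a + a = b + b" | "a + b = a" | "b + a = b" using st_cases by blast
  then show ?thesis
  proof cases
    case 1
    have "a + b = (1+1)*a" using add_equal_nu[OF 1] by (metis st_dbl)
    then have "(a+b)^D = (1+1)*a^D" using st_two_pow[OF assms, where 'a='a]
      by (simp add: power_mult_distrib)
    moreover have "a^D + b^D = (1+1)*a^D"
    proof -
      have q: "a^D + a^D = b^D + b^D" using st_dbl_pow[OF 1, of D] by (metis st_dbl)
      show ?thesis using add_equal_nu[OF q] by (metis st_dbl)
    qed
    ultimately show ?thesis by simp
  next
    case 2
    then show ?thesis using st_absorb_pow[OF 2 assms, of 0] by simp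
  next
    case 3
    then show ?thesis using st_absorb_pow[OF 3 assms, of 0] by (simp add: add.commute)
  qed
qed

lemma st_frob:
  fixes f :: "'b \<Rightarrow> 'a::supertropical"
  assumes "0 < D"
  shows "(sum f A)^D = (\<Sum>s\<in>A. (f s)^D)"
proof (induction A rule: infinite_finite_induct)
  case (infinite A) then show ?case using assms by (cases D) simp_all
next
  case empty then show ?case using assms by (cases D) simp_all
next
  case (insert a A) then show ?case using st_frob2[OF assms, of "f a" "sum f A"] by simp
qed

lemma st_prod_pow:
  fixes f :: "'b \<Rightarrow> 'a::{comm_monoid_mult}"
  shows "(prod f A)^D = (\<Prod>s\<in>A. (f s)^D)"
  by (induction A rule: infinite_finite_induct) (auto simp: power_mult_distrib)

lemma absorb_set:
  fixes f g :: "'b \<Rightarrow> 'a::supertropical"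
  assumes "finite P" "finite Q"
    and h: "\<And>q. q \<in> Q \<Longrightarrow> \<exists>p1\<in>P. \<exists>p2\<in>P. p1 \<noteq> p2 \<and> f p1 + f p2 + g q = f p1 + f p2"
  shows "sum f P + sum g Q = sum f P"
  using assms(2) h
proof (induction Q rule: finite_induct)
  case empty then show ?case by simp
next
  case (insert q Q)
  obtain p1 p2 where p: "p1\<in>P" "p2\<in>P" "p1\<noteq>p2" "f p1 + f p2 + g q = f p1 + f p2"
    using insert.prems by blast
  have s: "sum f P = f p1 + f p2 + sum f (P - {p1} - {p2})"
  proof -
    have "sum f P = f p1 + sum f (P - {p1})" using p assms(1) by (simp add: sum.remove)
    also have "sum f (P - {p1}) = f p2 + sum f (P - {p1} - {p2})"
      using p assms(1) by (simp add: sum.remove)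
    finally show ?thesis by (simp add: add.assoc)
  qed
  have "sum f P + g q = (f p1 + f p2 + g q) + sum f (P - {p1} - {p2})"
    unfolding s by (simp only: add_ac)
  also have "\<dots> = (f p1 + f p2) + sum f (P - {p1} - {p2})" using p(4) by simp
  also have "\<dots> = sum f P" using s by simp
  finally have gq: "sum f P + g q = sum f P" .
  have "sum f P + sum g (insert q Q) = (sum f P + g q) + sum g Q"
    using insert(1,2) by (simp add: add.assoc)
  then show ?case using gq insert by simp
qed




lemma perm_image:
  assumes "finite W" "P \<subseteq> W" "Q \<subseteq> W" "card P = card Q"
  shows "\<exists>\<rho>. \<rho> permutes W \<and> \<rho> ` P = Q"
proof -
  have fP: "finite P" "finite Q" using assms finite_subset by blast+
  obtain h1 where h1: "bij_betw h1 P Q" using finite_same_card_bij[OF fP assms(4)] by blast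
  have "card (W - P) = card (W - Q)" using assms fP by (simp add: card_Diff_subset)
  then obtain h2 where h2: "bij_betw h2 (W - P) (W - Q)"
    using finite_same_card_bij assms(1) by blast
  define \<rho> where "\<rho> = (\<lambda>y. if y \<in> P then h1 y else if y \<in> W then h2 y else y)"
  have b1: "bij_betw \<rho> P Q" using h1 unfolding \<rho>_def by (rule bij_betw_cong[THEN iffD1, rotated]) auto
  have b2: "bij_betw \<rho> (W - P) (W - Q)" using h2 unfolding \<rho>_def by (rule bij_betw_cong[THEN iffD1, rotated]) auto
  have "bij_betw \<rho> (P \<union> (W - P)) (Q \<union> (W - Q))" by (rule bij_betw_combine[OF b1 b2]) auto
  moreover have "P \<union> (W - P) = W" "Q \<union> (W - Q) = W" using assms by auto
  ultimately have "bij_betw \<rho> W W" by simp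
  then have "\<rho> permutes W" by (rule bij_imp_permutes) (auto simp: \<rho>_def assms(2)[THEN subsetD])
  moreover have "\<rho> ` P = Q" using b1 by (simp add: bij_betw_def)
  ultimately show ?thesis by blast
qed

lemma ob_props:
  assumes "\<sigma> permutes {1..n}" "\<And>k. k \<notin> {1..m} \<Longrightarrow> c' k = 0" "m \<le> n"
  shows "{k. (c' \<circ> \<sigma>) k \<noteq> 0} \<subseteq> {1..n}" "card {k. (c' \<circ> \<sigma>) k \<noteq> 0} \<le> m"
proof -
  have a: "{k. (c' \<circ> \<sigma>) k \<noteq> 0} \<subseteq> {k. \<sigma> k \<in> {1..m}}" using assms(2) by auto
  have b: "{k. \<sigma> k \<in> {1..m}} \<subseteq> {1..n}"
  proof
    fix k assume "k \<in> {k. \<sigma> k \<in> {1..m}}"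
    then have "\<sigma> k \<in> {1..n}" using assms(3) by auto
    then show "k \<in> {1..n}" using permutes_in_image[OF assms(1)] by blast
  qed
  show "{k. (c' \<circ> \<sigma>) k \<noteq> 0} \<subseteq> {1..n}" using a b by blast
  have inj: "inj \<sigma>" using permutes_inj[OF assms(1)] .
  have "card {k. (c' \<circ> \<sigma>) k \<noteq> 0} = card (\<sigma> ` {k. (c' \<circ> \<sigma>) k \<noteq> 0})"
    using inj by (simp add: card_image inj_on_subset)
  also have "\<dots> \<le> card {1..m}" using a by (intro card_mono) auto
  finally show "card {k. (c' \<circ> \<sigma>) k \<noteq> 0} \<le> m" by simp
qed

lemma key_terms:
  fixes x :: "nat \<Rightarrow> 'a::supertropical" and b :: "nat \<Rightarrow> nat"
  assumes fS: "finite S" and pS: "pp \<notin> S" and qS: "q \<in> S"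
    and pn: "pp \<in> {1..n}" and qn: "q \<in> {1..n}" and bq: "b q = 0" and bp: "0 < b pp" and D: "0 < D"
  defines "T \<equiv> (\<lambda>S b. (\<Prod>k\<in>S. x k)^D * (\<Prod>k\<in>{1..n}. x k ^ b k))"
  shows "T (insert pp (S-{q})) b + T S (b \<circ> transpose pp q) + T S b
       = T (insert pp (S-{q})) b + T S (b \<circ> transpose pp q)"
proof -
  have pq: "pp \<noteq> q" using pS qS by auto
  define A where "A = (\<Prod>k\<in>S-{q}. x k)"
  define R where "R = (\<Prod>k\<in>{1..n}-{pp}-{q}. x k ^ b k)"
  define e where "e = b pp"
  define W where "W = A^D * R"
  have PS: "(\<Prod>k\<in>S. x k) = x q * A" unfolding A_def using fS qS by (simp add: prod.remove)
  have PS1: "(\<Prod>k\<in>insert pp (S-{q}). x k) = x pp * A" unfolding A_def using fS pS by simp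
  have split: "(\<Prod>k\<in>{1..n}. x k ^ f k) = x pp ^ f pp * (x q ^ f q * (\<Prod>k\<in>{1..n}-{pp}-{q}. x k ^ f k))" for f
  proof -
    have "(\<Prod>k\<in>{1..n}. x k ^ f k) = x pp ^ f pp * (\<Prod>k\<in>{1..n}-{pp}. x k ^ f k)"
      using pn by (simp add: prod.remove)
    also have "(\<Prod>k\<in>{1..n}-{pp}. x k ^ f k) = x q ^ f q * (\<Prod>k\<in>{1..n}-{pp}-{q}. x k ^ f k)"
      using prod.remove[of "{1..n}-{pp}" q "\<lambda>k. x k ^ f k"] qn pq by simp
    finally show ?thesis .
  qed
  have R2: "(\<Prod>k\<in>{1..n}-{pp}-{q}. x k ^ (b \<circ> transpose pp q) k) = R"
    unfolding R_def by (rule prod.cong) auto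
  have M1: "(\<Prod>k\<in>{1..n}. x k ^ b k) = x pp ^ e * R"
    using split[of b] bq unfolding R_def e_def by simp
  have M2: "(\<Prod>k\<in>{1..n}. x k ^ (b \<circ> transpose pp q) k) = x q ^ e * R"
    using split[of "b \<circ> transpose pp q"] bq R2 unfolding e_def by simp
  have t0: "T S b = W * (x pp ^ e * x q ^ D)"
    unfolding T_def W_def PS M1 by (simp add: power_mult_distrib ac_simps)
  have t1: "T (insert pp (S-{q})) b = W * x pp ^ (e + D)"
    unfolding T_def W_def PS1 M1 by (simp add: power_mult_distrib power_add ac_simps)
  have t2: "T S (b \<circ> transpose pp q) = W * x q ^ (e + D)"
    unfolding T_def W_def PS M2 by (simp add: power_mult_distrib power_add ac_simps)
  have e0: "0 < e" using bp e_def by simp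
  have mix: "x pp ^ (e+D) + x q ^ (e+D) + x pp ^ e * x q ^ D = x pp ^ (e+D) + x q ^ (e+D)"
    by (rule st_mix[OF e0 D])
  have "W * (x pp ^ (e+D) + x q ^ (e+D) + x pp ^ e * x q ^ D) = W * (x pp ^ (e+D) + x q ^ (e+D))"
    using mix by simp
  then show ?thesis unfolding t0 t1 t2 by (simp add: distrib_left)
qed




lemma core:
  fixes x :: "nat \<Rightarrow> 'a::supertropical" and c' :: "nat \<Rightarrow> nat"
  assumes mn: "m \<le> n" and D: "0 < D"
    and supp: "\<And>k. k \<notin> {1..m} \<Longrightarrow> c' k = 0"
  shows "minsym n (\<lambda>k. c' k + (if k \<in> {1..m} then D else 0)) x = esym n m x ^ D * minsym n c' x"
proof -
  define c where "c = (\<lambda>k. c' k + (if k \<in> {1..m} then D else 0))"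
  define mo where "mo = (\<lambda>a::nat\<Rightarrow>nat. \<Prod>k\<in>{1..n}. x k ^ a k)"
  define SS where "SS = {S. S \<subseteq> {1..n} \<and> card S = m}"
  define OB where "OB = {c' \<circ> \<sigma> | \<sigma>. \<sigma> permutes {1..n}}"
  define OC where "OC = {c \<circ> \<sigma> | \<sigma>. \<sigma> permutes {1..n}}"
  define T where "T = (\<lambda>(S::nat set,b). (\<Prod>k\<in>S. x k)^D * mo b)"
  define I where "I = SS \<times> OB"
  define \<beta> where "\<beta> = (\<lambda>(S::nat set,b::nat\<Rightarrow>nat). card ({k. b k \<noteq> 0} - S))"
  define G where "G = {p\<in>I. \<beta> p = 0}"
  have finSS: "finite SS" unfolding SS_def by (rule finite_subset[of _ "Pow {1..n}"]) auto
  have finOB: "finite OB" unfolding OB_def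
    using finite_permutations[of "{1..n}"] by (simp add: setcompr_eq_image)
  have finI: "finite I" unfolding I_def using finSS finOB by simp
  have OBp: "{k. b k \<noteq> 0} \<subseteq> {1..n} \<and> card {k. b k \<noteq> 0} \<le> m \<and> finite {k. b k \<noteq> 0}" if bOB: "b \<in> OB" for b
  proof -
    obtain \<sigma> where s: "\<sigma> permutes {1..n}" "b = c' \<circ> \<sigma>" using bOB unfolding OB_def by blast
    have "{k. b k \<noteq> 0} \<subseteq> {1..n}" "card {k. b k \<noteq> 0} \<le> m" using ob_props[where c'=c' and m=m, OF s(1) supp mn] s(2) by auto
    then show ?thesis using finite_subset[of "{k. b k \<noteq> 0}" "{1..n}"] by auto
  qed
  have step1: "esym n m x ^ D * minsym n c' x = sum T I"
  proof -
    have "esym n m x = (\<Sum>S\<in>SS. \<Prod>k\<in>S. x k)" unfolding esym_def SS_def by simp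
    then have "esym n m x ^ D = (\<Sum>S\<in>SS. (\<Prod>k\<in>S. x k)^D)" using st_frob[OF D] by simp
    moreover have "minsym n c' x = sum mo OB" unfolding minsym_def mo_def OB_def by simp
    ultimately have "esym n m x ^ D * minsym n c' x = (\<Sum>S\<in>SS. \<Sum>b\<in>OB. (\<Prod>k\<in>S. x k)^D * mo b)"
      by (simp add: sum_product)
    also have "\<dots> = sum T I" unfolding I_def T_def by (simp add: sum.cartesian_product)
    finally show ?thesis .
  qed
  have key: "\<exists>p1\<in>{p\<in>I. \<beta> p \<le> k}. \<exists>p2\<in>{p\<in>I. \<beta> p \<le> k}. p1 \<noteq> p2 \<and> T p1 + T p2 + T p = T p1 + T p2"
    if pI: "p \<in> {p\<in>I. \<beta> p = Suc k}" for p k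
  proof -
    obtain S b where p: "p = (S, b)" by (cases p)
    have S: "S \<subseteq> {1..n}" "card S = m" and bOB: "b \<in> OB" and bet: "card ({k. b k \<noteq> 0} - S) = Suc k"
      using pI unfolding p I_def SS_def \<beta>_def by auto
    obtain \<tau> where tau: "\<tau> permutes {1..n}" "b = c' \<circ> \<tau>" using bOB unfolding OB_def by blast
    have sb: "{k. b k \<noteq> 0} \<subseteq> {1..n}" "card {k. b k \<noteq> 0} \<le> m" "finite {k. b k \<noteq> 0}"
      using OBp[OF bOB] by auto
    have fS: "finite S" using S(1) finite_subset by blast
    have nemp: "{k. b k \<noteq> 0} - S \<noteq> {}"
    proof
      assume "{k. b k \<noteq> 0} - S = {}"
      then have "card ({k. b k \<noteq> 0} - S) = 0" by (simp only: card.empty)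
      then show False using bet by simp
    qed
    then obtain pp where pp: "pp \<in> {k. b k \<noteq> 0} - S" by blast
    obtain q where q: "q \<in> S - {k. b k \<noteq> 0}"
    proof (rule ccontr)
      assume "\<not> thesis"
      then have sub: "S \<subseteq> {k. b k \<noteq> 0}" using that by blast
      then have "card S \<le> card {k. b k \<noteq> 0}" using sb(3) by (rule card_mono[rotated])
      then have "S = {k. b k \<noteq> 0}" using card_subset_eq[OF sb(3) sub] sb(2) S(2) by simp
      then show False using pp by blast
    qed
    define S1 where "S1 = insert pp (S - {q})"
    define b2 where "b2 = b \<circ> transpose pp q"
    have pn: "pp \<in> {1..n}" using pp sb(1) by blast
    have qn: "q \<in> {1..n}" using q S(1) by blast
    have pq: "pp \<noteq> q" using pp q by blast
    have m1: "card (S - {q}) = m - 1" using q fS S(2) by simp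
    have "m \<ge> 1" using card_gt_0_iff[of S] q S(2) fS by auto
    then have cS1: "card S1 = m" unfolding S1_def using m1 pp fS by simp
    have S1I: "(S1, b) \<in> I" unfolding I_def SS_def S1_def using S(1) pn bOB cS1[unfolded S1_def] by auto
    have "{k. b k \<noteq> 0} - S1 = ({k. b k \<noteq> 0} - S) - {pp}" unfolding S1_def using q by auto
    then have bS1: "\<beta> (S1, b) = k" unfolding \<beta>_def using bet pp sb(3) by simp
    have b2OB: "b2 \<in> OB"
    proof -
      have "\<tau> \<circ> transpose pp q permutes {1..n}"
        by (rule permutes_compose[OF permutes_swap_id[OF pn qn] tau(1)])
      moreover have "b2 = c' \<circ> (\<tau> \<circ> transpose pp q)" unfolding b2_def tau(2) by (simp add: o_assoc)
      ultimately show ?thesis unfolding OB_def by blast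
    qed
    have S2I: "(S, b2) \<in> I" unfolding I_def SS_def using S b2OB by auto
    have "{k. b2 k \<noteq> 0} - S = ({k. b k \<noteq> 0} - S) - {pp}"
    proof -
      have o: "b2 k' \<noteq> 0 \<longleftrightarrow> b k' \<noteq> 0" if "k' \<noteq> pp" "k' \<noteq> q" for k'
        unfolding b2_def using that by simp
      have z: "b2 pp = 0" unfolding b2_def using q by simp
      show ?thesis
      proof (rule set_eqI)
        fix y show "y \<in> {k. b2 k \<noteq> 0} - S \<longleftrightarrow> y \<in> ({k. b k \<noteq> 0} - S) - {pp}"
          using o[of y] z q by (cases "y = pp"; cases "y = q") auto
      qed
    qed
    then have bS2: "\<beta> (S, b2) = k" unfolding \<beta>_def using bet pp sb(3) by simp
    have ne: "(S1, b) \<noteq> (S, b2)" unfolding S1_def using pp by auto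
    have bq: "b q = 0" and bp: "0 < b pp" using q pp by auto
    have "T (S1,b) + T (S,b2) + T (S,b) = T (S1,b) + T (S,b2)"
    proof -
      have pS': "pp \<notin> S" and qS': "q \<in> S" using pp q by auto
      show ?thesis
        using key_terms[OF fS pS' qS' pn qn bq bp D, of x]
        unfolding T_def S1_def b2_def mo_def by (simp only: prod.case)
    qed
    moreover have "(S1, b) \<in> {p\<in>I. \<beta> p \<le> k}" using S1I bS1 by simp
    moreover have "(S, b2) \<in> {p\<in>I. \<beta> p \<le> k}" using S2I bS2 by simp
    ultimately show ?thesis unfolding p using ne by blast
  qed
  have stepk: "sum T {p\<in>I. \<beta> p \<le> k} = sum T G" for k
  proof (induction k)
    case 0 then show ?case unfolding G_def by simp
  next
    case (Suc k)
    have un: "{p\<in>I. \<beta> p \<le> Suc k} = {p\<in>I. \<beta> p \<le> k} \<union> {p\<in>I. \<beta> p = Suc k}" by auto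
    have "sum T {p\<in>I. \<beta> p \<le> Suc k} = sum T {p\<in>I. \<beta> p \<le> k} + sum T {p\<in>I. \<beta> p = Suc k}"
      unfolding un using finI by (intro sum.union_disjoint) auto
    also have "\<dots> = sum T {p\<in>I. \<beta> p \<le> k}"
      by (rule absorb_set) (use finI key in auto)
    finally show ?case using Suc.IH by simp
  qed
  have step2: "sum T I = sum T G"
  proof -
    have "{p\<in>I. \<beta> p \<le> n} = I"
    proof -
      have "\<beta> p \<le> n" if "p \<in> I" for p
      proof -
        obtain S b where p: "p = (S,b)" by (cases p)
        have "b \<in> OB" using that p I_def by auto
        then have "card {k. b k \<noteq> 0} \<le> m" "finite {k. b k \<noteq> 0}" using OBp by auto
        then have "card ({k. b k \<noteq> 0} - S) \<le> m" using card_mono[of "{k. b k \<noteq> 0}" "{k. b k \<noteq> 0} - S"]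
          by auto
        then show ?thesis unfolding p \<beta>_def using mn by simp
      qed
      then show ?thesis by auto
    qed
    then show ?thesis using stepk[of n] by simp
  qed
  define \<phi> where "\<phi> = (\<lambda>(S::nat set, b::nat\<Rightarrow>nat). (\<lambda>k. b k + (if k \<in> S then D else 0)))"
  define \<psi> where "\<psi> = (\<lambda>a::nat\<Rightarrow>nat. ({k. a k \<noteq> 0}, (\<lambda>k. a k - (if a k \<noteq> 0 then D else 0))))"
  have Gchar: "p \<in> G \<longleftrightarrow> (\<exists>S b. p = (S,b) \<and> S \<in> SS \<and> b \<in> OB \<and> {k. b k \<noteq> 0} \<subseteq> S)" for p
  proof
    assume "p \<in> G"
    then obtain S b where p: "p = (S,b)" "S \<in> SS" "b \<in> OB" "card ({k. b k \<noteq> 0} - S) = 0"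
      unfolding G_def I_def \<beta>_def by auto
    then have "finite ({k. b k \<noteq> 0} - S)" using OBp by auto
    then show "\<exists>S b. p = (S,b) \<and> S \<in> SS \<and> b \<in> OB \<and> {k. b k \<noteq> 0} \<subseteq> S" using p by auto
  next
    assume "\<exists>S b. p = (S,b) \<and> S \<in> SS \<and> b \<in> OB \<and> {k. b k \<noteq> 0} \<subseteq> S"
    then obtain S b where p: "p = (S,b)" "S \<in> SS" "b \<in> OB" "{k. b k \<noteq> 0} \<subseteq> S" by blast
    then have "{k. b k \<noteq> 0} - S = {}" by blast
    then have e: "card ({k. b k \<noteq> 0} - S) = 0" by (simp only: card.empty)
    show "p \<in> G" unfolding G_def I_def \<beta>_def using p e by simp
  qed
  have OCp: "c k \<noteq> 0 \<longleftrightarrow> k \<in> {1..m}" for k using supp D unfolding c_def by (cases "k \<in> {1..m}") auto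
  have step3: "sum T G = sum mo OC"
  proof (rule sum.reindex_bij_witness[where i=\<psi> and j=\<phi>])
    fix p assume "p \<in> G"
    then obtain S b where p: "p = (S,b)" "S \<in> SS" "b \<in> OB" "{k. b k \<noteq> 0} \<subseteq> S" using Gchar by blast
    have e1: "{k. b k + (if k \<in> S then D else 0) \<noteq> 0} = S" using p(4) D by auto
    show "\<psi> (\<phi> p) = p" unfolding p \<phi>_def \<psi>_def using e1 p(4)
      by (auto intro!: ext)
    show "mo (\<phi> p) = T p"
    proof -
      have S1: "S \<subseteq> {1..n}" using p(2) SS_def by auto
      have "mo (\<phi> p) = (\<Prod>k\<in>{1..n}. x k ^ b k * (if k \<in> S then x k ^ D else 1))"
        unfolding mo_def p \<phi>_def by (intro prod.cong) (auto simp: power_add)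
      also have "\<dots> = mo b * (\<Prod>k\<in>{1..n}. if k \<in> S then x k ^ D else 1)"
        unfolding mo_def by (simp add: prod.distrib)
      also have "(\<Prod>k\<in>{1..n}. if k \<in> S then x k ^ D else 1) = (\<Prod>k\<in>{1..n} \<inter> S. x k ^ D)"
        by (simp add: prod.inter_restrict)
      also have "{1..n} \<inter> S = S" using S1 by auto
      finally show ?thesis unfolding T_def p by (simp add: st_prod_pow mult.commute)
    qed
    show "\<phi> p \<in> OC"
    proof -
      obtain \<tau> where tau: "\<tau> permutes {1..n}" "b = c' \<circ> \<tau>" using p(3) unfolding OB_def by blast
      have S: "S \<subseteq> {1..n}" "card S = m" using p(2) SS_def by auto
      define V where "V = {k. c' k \<noteq> 0}"
      have V1: "V \<subseteq> {1..m}"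
      proof
        fix v assume "v \<in> V" then show "v \<in> {1..m}" using supp[of v] V_def by (cases "v \<in> {1..m}") auto
      qed
      have finV: "finite V" using V1 finite_subset by blast
      have VS: "V \<subseteq> \<tau> ` S"
      proof
        fix v assume "v \<in> V"
        obtain k where "\<tau> k = v" using permutes_surj[OF tau(1)] by (metis surjD)
        then have "b k \<noteq> 0" using \<open>v \<in> V\<close> tau(2) V_def by simp
        then show "v \<in> \<tau> ` S" using p(4) \<open>\<tau> k = v\<close> by blast
      qed
      define P where "P = \<tau> ` S - V"
      define Q where "Q = {1..m} - V"
      define W where "W = {1..n} - V"
      have injt: "inj \<tau>" using permutes_inj[OF tau(1)] .
      have ctS: "card (\<tau> ` S) = m" using S(2) injt by (simp add: card_image inj_on_subset)
      have cP: "card P = card Q" unfolding P_def Q_def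
        using card_Diff_subset[OF finV VS] card_Diff_subset[OF finV V1] ctS by simp
      have tSn: "\<tau> ` S \<subseteq> {1..n}" using S(1) permutes_image[OF tau(1)] by blast
      have PW: "P \<subseteq> W" unfolding P_def W_def using tSn by blast
      have QW: "Q \<subseteq> W" unfolding Q_def W_def using mn by auto
      obtain \<rho> where rho: "\<rho> permutes W" "\<rho> ` P = Q"
        using perm_image[OF _ PW QW cP] W_def by auto
      have rhon: "\<rho> permutes {1..n}" using permutes_subset[OF rho(1)] W_def by blast
      define \<sigma> where "\<sigma> = \<rho> \<circ> \<tau>"
      have sig: "\<sigma> permutes {1..n}" unfolding \<sigma>_def by (rule permutes_compose[OF tau(1) rhon])
      have injr: "inj \<rho>" using permutes_inj[OF rho(1)] .
      have cl1: "c' (\<rho> y) = c' y" for y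
      proof (cases "y \<in> W")
        case True
        then have "\<rho> y \<in> W" using permutes_in_image[OF rho(1)] by blast
        then show ?thesis using True W_def V_def by auto
      next
        case False
        then show ?thesis using permutes_not_in[OF rho(1)] by simp
      qed
      have cl2: "\<rho> (\<tau> k) \<in> {1..m} \<longleftrightarrow> k \<in> S" for k
      proof -
        consider "\<tau> k \<in> V" | "\<tau> k \<in> W" | "\<tau> k \<notin> {1..n}" using W_def by blast
        then show ?thesis
        proof cases
          case 1
          then have "\<tau> k \<notin> W" using W_def by blast
          then have "\<rho> (\<tau> k) = \<tau> k" using permutes_not_in[OF rho(1)] by simp
          moreover have "b k \<noteq> 0" using 1 tau(2) V_def by simp
          ultimately show ?thesis using 1 V1 p(4) by auto
        next
          case 2
          then have rW: "\<rho> (\<tau> k) \<in> W" using permutes_in_image[OF rho(1)] by blast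
          have "\<rho> (\<tau> k) \<in> {1..m} \<longleftrightarrow> \<rho> (\<tau> k) \<in> Q" using rW Q_def W_def by auto
          also have "\<dots> \<longleftrightarrow> \<tau> k \<in> P" using rho(2) injr by (auto dest: injD)
          also have "\<dots> \<longleftrightarrow> k \<in> S" using 2 injt P_def W_def by (auto dest: injD)
          finally show ?thesis .
        next
          case 3
          then have "\<tau> k \<notin> W" using W_def by blast
          then have "\<rho> (\<tau> k) = \<tau> k" using permutes_not_in[OF rho(1)] by simp
          moreover have "k \<notin> S" using 3 tSn by blast
          ultimately show ?thesis using 3 mn by auto
        qed
      qed
      have "\<phi> p = c \<circ> \<sigma>"
        unfolding p \<phi>_def c_def \<sigma>_def using cl1 cl2 tau(2) by (auto intro!: ext)
      then show ?thesis unfolding OC_def using sig by blast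
    qed
  next
    fix a assume "a \<in> OC"
    then obtain \<sigma> where s: "\<sigma> permutes {1..n}" "a = c \<circ> \<sigma>" unfolding OC_def by blast
    have az: "a k \<noteq> 0 \<longleftrightarrow> \<sigma> k \<in> {1..m}" for k using OCp s(2) by simp
    have ab: "a k - (if a k \<noteq> 0 then D else 0) = c' (\<sigma> k)" for k
      using s(2) az[of k] unfolding c_def by auto
    show "\<phi> (\<psi> a) = a"
    proof (rule ext)
      fix k show "\<phi> (\<psi> a) k = a k"
        unfolding \<phi>_def \<psi>_def using s(2) az[of k] unfolding c_def by auto
    qed
    show "\<psi> a \<in> G"
    proof -
      define S where "S = {k. \<sigma> k \<in> {1..m}}"
      have h1: "{k. a k \<noteq> 0} = S" using az unfolding S_def by blast
      have h2: "(\<lambda>k. a k - (if a k \<noteq> 0 then D else 0)) = c' \<circ> \<sigma>"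
        by (rule ext) (simp only: ab o_apply)
      have pa: "\<psi> a = (S, c' \<circ> \<sigma>)" unfolding \<psi>_def by (simp only: h1 h2)
      have Sn: "S \<subseteq> {1..n}"
      proof
        fix k assume "k \<in> S"
        then have "\<sigma> k \<in> {1..n}" using S_def mn by auto
        then show "k \<in> {1..n}" using permutes_in_image[OF s(1)] by blast
      qed
      have "\<sigma> ` S = {1..m}"
      proof
        show "\<sigma> ` S \<subseteq> {1..m}" unfolding S_def by auto
        show "{1..m} \<subseteq> \<sigma> ` S"
        proof
          fix y assume "y \<in> {1..m}"
          obtain k where "\<sigma> k = y" using permutes_surj[OF s(1)] by (metis surjD)
          then show "y \<in> \<sigma> ` S" using \<open>y \<in> {1..m}\<close> S_def by blast
        qed
      qed
      moreover have "card (\<sigma> ` S) = card S"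
        using permutes_inj[OF s(1)] by (intro card_image) (auto intro: inj_on_subset)
      ultimately have "card S = m" by simp
      then have "S \<in> SS" using Sn SS_def by simp
      moreover have "c' \<circ> \<sigma> \<in> OB" using s(1) OB_def by blast
      moreover have "{k. (c' \<circ> \<sigma>) k \<noteq> 0} \<subseteq> S"
      proof
        fix k assume "k \<in> {k. (c' \<circ> \<sigma>) k \<noteq> 0}"
        then have "c' (\<sigma> k) \<noteq> 0" by simp
        then have "\<sigma> k \<in> {1..m}" using supp[of "\<sigma> k"] by (cases "\<sigma> k \<in> {1..m}") auto
        then show "k \<in> S" unfolding S_def by simp
      qed
      ultimately show ?thesis unfolding Gchar using pa by blast
    qed
  qed
  have "minsym n c x = sum mo OC" unfolding minsym_def mo_def OC_def by simp
  then show ?thesis using step1 step2 step3 unfolding c_def by simp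
qed




theorem lemma5p7:
  fixes x :: "nat \<Rightarrow> 'a::supertropical" and n j :: nat and i d :: "nat \<Rightarrow> nat"
  assumes "j \<ge> 1"
    and "i 0 = 0"
    and "\<forall>t<j. i t < i (Suc t)"
    and "i j \<le> n"
    and "\<forall>t\<in>{1..j}. d t \<ge> 1"
    and "\<forall>t\<in>{1..<j}. d (Suc t) < d t"
  shows "minsym n (\<lambda>k. \<Sum>t\<in>{1..j}. d t * blk i t k) x
       = esym n (i j) x ^ d j * minsym n (\<lambda>k. \<Sum>t\<in>{1..j-1}. (d t - d j) * blk i t k) x"
proof -
  define c' where "c' = (\<lambda>k. \<Sum>t\<in>{1..j-1}. (d t - d j) * blk i t k)"
  have im0: "\<forall>a. a < b \<longrightarrow> b \<le> j \<longrightarrow> i a < i b" for b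
  proof (induction b)
    case 0 then show ?case by simp
  next
    case (Suc b)
    show ?case
    proof (intro allI impI)
      fix a assume a: "a < Suc b" "Suc b \<le> j"
      have "i b < i (Suc b)" using assms(3) a(2) by simp
      show "i a < i (Suc b)"
      proof (cases "a = b")
        case False
        then have "i a < i b" using Suc.IH a by auto
        then show ?thesis using \<open>i b < i (Suc b)\<close> by linarith
      qed (use \<open>i b < i (Suc b)\<close> in simp)
    qed
  qed
  have ile: "i a \<le> i b" if "a \<le> b" "b \<le> j" for a b
  proof (cases "a = b")
    case False
    then have "a < b" using that by simp
    then show ?thesis using im0[of b] that by (meson less_imp_le)
  qed simp
  have dm0: "\<forall>t. 1 \<le> t \<longrightarrow> t < s \<longrightarrow> s \<le> j \<longrightarrow> d s < d t" for s
  proof (induction s)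
    case 0 then show ?case by simp
  next
    case (Suc s)
    show ?case
    proof (intro allI impI)
      fix t assume a: "1 \<le> t" "t < Suc s" "Suc s \<le> j"
      have "d (Suc s) < d s" using assms(6) a by auto
      show "d (Suc s) < d t"
      proof (cases "t = s")
        case False
        then have "d s < d t" using Suc.IH a by auto
        then show ?thesis using \<open>d (Suc s) < d s\<close> by linarith
      qed (use \<open>d (Suc s) < d s\<close> in simp)
    qed
  qed
  have blk0: "blk i t k = 0" if "k \<notin> {1..i j}" "t \<in> {1..j}" for k t
  proof (cases "k = 0")
    case True then show ?thesis unfolding blk_def by simp
  next
    case False
    then have "k > i j" using that(1) by auto
    moreover have "i t \<le> i j" using ile[of t j] that(2) by auto
    ultimately show ?thesis unfolding blk_def by auto
  qed
  have blk1: "\<exists>t0\<in>{1..j}. \<forall>t\<in>{1..j}. blk i t k = (if t = t0 then 1 else 0)" if k: "k \<in> {1..i j}" for k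
  proof -
    define t0 where "t0 = (LEAST t. k \<le> i t)"
    have kt0: "k \<le> i t0" unfolding t0_def by (rule LeastI[of _ j]) (use k in auto)
    have t0j: "t0 \<le> j" unfolding t0_def by (rule Least_le) (use k in auto)
    have t00: "t0 \<noteq> 0"
    proof
      assume "t0 = 0"
      then have "k \<le> 0" using kt0 assms(2) by simp
      then show False using k by simp
    qed
    have lt: "\<not> k \<le> i t" if "t < t0" for t using not_less_Least[of t "\<lambda>t. k \<le> i t"] that t0_def by simp
    have kt1: "i (t0 - 1) < k" using lt[of "t0 - 1"] t00 by simp
    have "\<forall>t\<in>{1..j}. blk i t k = (if t = t0 then 1 else 0)"
    proof
      fix t assume t: "t \<in> {1..j}"
      consider "t = t0" | "t < t0" | "t > t0" by linarith
      then show "blk i t k = (if t = t0 then 1 else 0)"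
      proof cases
        case 1 then show ?thesis using kt0 kt1 unfolding blk_def by simp
      next
        case 2 then show ?thesis using lt[of t] unfolding blk_def by simp
      next
        case 3
        then have "i t0 \<le> i (t - 1)" using ile[of t0 "t-1"] t by auto
        then show ?thesis using 3 kt0 unfolding blk_def by auto
      qed
    qed
    then show ?thesis using t00 t0j by auto
  qed
  have sblk: "(\<Sum>t\<in>A. f t * blk i t k) = (if t0 \<in> A then f t0 else 0)"
    if "A \<subseteq> {1..j}" "\<forall>t\<in>{1..j}. blk i t k = (if t = t0 then 1 else 0)" for A f k t0
  proof -
    have "(\<Sum>t\<in>A. f t * blk i t k) = (\<Sum>t\<in>A. if t = t0 then f t else 0)"
      using that by (intro sum.cong) auto
    also have "\<dots> = (if t0 \<in> A then f t0 else 0)"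
      using finite_subset[OF that(1)] by simp
    finally show ?thesis .
  qed
  have supp: "c' k = 0" if "k \<notin> {1..i j}" for k
    unfolding c'_def using blk0[OF that] by (intro sum.neutral) auto
  have eq: "(\<lambda>k. \<Sum>t\<in>{1..j}. d t * blk i t k) = (\<lambda>k. c' k + (if k \<in> {1..i j} then d j else 0))"
  proof (rule ext)
    fix k
    show "(\<Sum>t\<in>{1..j}. d t * blk i t k) = c' k + (if k \<in> {1..i j} then d j else 0)"
    proof (cases "k \<in> {1..i j}")
      case False
      have "(\<Sum>t\<in>{1..j}. d t * blk i t k) = 0" using blk0[OF False] by (intro sum.neutral) auto
      moreover have "(if k \<in> {1..i j} then d j else 0) = 0" by (rule if_not_P[OF False])
      ultimately show ?thesis using supp[OF False] by simp
    next
      case True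
      then obtain t0 where t0: "t0 \<in> {1..j}" "\<forall>t\<in>{1..j}. blk i t k = (if t = t0 then 1 else 0)"
        using blk1 by blast
      have l: "(\<Sum>t\<in>{1..j}. d t * blk i t k) = d t0" using sblk[OF _ t0(2)] t0(1) by simp
      have r: "c' k = (if t0 \<in> {1..j-1} then d t0 - d j else 0)"
        unfolding c'_def using sblk[OF _ t0(2), of "{1..j-1}"] by auto
      show ?thesis
      proof (cases "t0 \<in> {1..j-1}")
        case True
        then have "d j < d t0" using dm0[of j] by auto
        then show ?thesis using l r True \<open>k \<in> {1..i j}\<close> by simp
      next
        case False
        then have "t0 = j" using t0(1) by auto
        then show ?thesis using l r False \<open>k \<in> {1..i j}\<close> by simp
      qed
    qed
  qed
  have "j \<in> {1..j}" using assms(1) by simp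
  then have dj: "0 < d j" using assms(5) by fastforce
  show ?thesis
    unfolding eq c'_def[symmetric]
    by (rule core[OF assms(4) dj]) (use supp in auto)
qed


end
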